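(* Let $n \in \mathbb{N}$, $X = Y = L^2([0,1]^n)$, $\mathcal{D}^+ = \{x \in X : x \ge 0 \text{ a.e. on } [0,1]^n\}$, and define $F : \mathcal{D}^+ \to Y$ by $[F(x)](s) = \int_{[0,s_1]\times\cdots\times[0,s_n]} x(s-t)\,x(t)\,dt$ for $s \in [0,1]^n$. Then the equation $F(x) = y$ is locally ill-posed at every point $x^\dagger \in \mathcal{D}^+$: for every $x^\dagger \in \mathcal{D}^+$ and every $r>0$ there exists a sequence $\{x_k\} \subset \mathcal{D}^+$ with $\|x_k - x^\dagger\|_X \le r$ for all $k$, such that $\|F(x_k) - F(x^\dagger)\|_Y \to 0$ but $\|x_k - x^\dagger\|_X \not\to 0$ as $k \to \infty$.
   Context: All functions are real-valued; $L^2([0,1]^n)$ denotes the real functions in $L^2(\mathbb{R}^n)$ vanishing a.e. outside $[0,1]^n$, with the usual $L^2$ norm. *)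

theory Defs
  imports "HOL-Analysis.Analysis"
begin

definition unit_cube :: "(real^'n) set" where
  "unit_cube = cbox 0 1"

text \<open>Real L^2 functions on R^n vanishing a.e. outside [0,1]^n (as representatives).\<close>
definition L2cube :: "(real^'n \<Rightarrow> real) set" where
  "L2cube = {x. x \<in> borel_measurable lebesgue \<and>
                 integrable lebesgue (\<lambda>t. (x t)^2) \<and>
                 (AE t in lebesgue. t \<notin> unit_cube \<longrightarrow> x t = 0)}"

definition L2norm :: "(real^'n \<Rightarrow> real) \<Rightarrow> real" where
  "L2norm x = sqrt (LINT t|lebesgue. (x t)^2)"

definition Dplus :: "(real^'n \<Rightarrow> real) set" where
  "Dplus = {x \<in> L2cube. AE t in lebesgue. t \<in> unit_cube \<longrightarrow> x t \<ge> 0}"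

text \<open>Autoconvolution operator: [F x](s) = integral over [0,s_1]x...x[0,s_n] of x(s-t) x(t) dt
  for s in [0,1]^n, and 0 outside the cube (elements of Y vanish there).\<close>
definition autoconv :: "(real^'n \<Rightarrow> real) \<Rightarrow> (real^'n \<Rightarrow> real)" where
  "autoconv x s = (if s \<in> unit_cube
      then (LINT t|restrict_space lebesgue (cbox 0 s). x (s - t) * x t) else 0)"

end

theory Submission
  imports Defs
begin

lemma lebesgue_reflect:
  fixes s :: "'a::euclidean_space"
  shows "distr lebesgue lebesgue (\<lambda>x. s - x) = lebesgue" and "(\<lambda>x. s - x) \<in> lebesgue \<rightarrow>\<^sub>M lebesgue"
proof -
  have T: "(\<lambda>x. s + (\<Sum>j\<in>Basis. (- 1 * (x \<bullet> j)) *\<^sub>R j)) = (\<lambda>x. s - x)"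
  proof
    fix x :: 'a
    have "(\<Sum>j\<in>Basis. (- 1 * (x \<bullet> j)) *\<^sub>R j) = - (\<Sum>j\<in>Basis. (x \<bullet> j) *\<^sub>R j)"
      by (simp add: sum_negf)
    then show "s + (\<Sum>j\<in>Basis. (- 1 * (x \<bullet> j)) *\<^sub>R j) = s - x"
      by (simp add: euclidean_representation)
  qed
  have "lebesgue = density (distr lebesgue lebesgue (\<lambda>x. s - x)) (\<lambda>_. (\<Prod>j\<in>(Basis::'a set). \<bar>- 1::real\<bar>))"
    using lebesgue_affine_euclidean[of "\<lambda>_. -1" s] T by simp
  then show "distr lebesgue lebesgue (\<lambda>x. s - x) = lebesgue" by (simp add: density_1)
  show "(\<lambda>x. s - x) \<in> lebesgue \<rightarrow>\<^sub>M lebesgue"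
    using lebesgue_affine_measurable[of "\<lambda>_. -1" s] T by simp
qed

lemma integrable_reflect_leb:
  fixes s :: "'a::euclidean_space" and g :: "'a \<Rightarrow> real"
  assumes "g \<in> borel_measurable lebesgue"
  shows "integrable lebesgue (\<lambda>x. g (s - x)) \<longleftrightarrow> integrable lebesgue g"
    and "integral\<^sup>L lebesgue (\<lambda>x. g (s - x)) = integral\<^sup>L lebesgue g"
proof -
  show "integrable lebesgue (\<lambda>x. g (s - x)) \<longleftrightarrow> integrable lebesgue g"
    using integrable_distr_eq[OF lebesgue_reflect(2)[of s] assms] lebesgue_reflect(1)[of s] by simp
  show "integral\<^sup>L lebesgue (\<lambda>x. g (s - x)) = integral\<^sup>L lebesgue g"
    using integral_distr[OF lebesgue_reflect(2)[of s] assms] lebesgue_reflect(1)[of s] by simp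
qed

lemma hh_zero:
  fixes s t :: "real^'n"
  assumes "s \<in> unit_cube" "1/2 < c"
  shows "indicator (cbox (\<chi> i. c) 1) (s - t) * indicator (cbox (\<chi> i. c) 1) t = (0::real)"
proof (rule ccontr)
  assume "indicator (cbox (\<chi> i. c) 1) (s - t) * indicator (cbox (\<chi> i. c) 1) t \<noteq> (0::real)"
  then have "s - t \<in> cbox (\<chi> i. c) 1" "t \<in> cbox (\<chi> i. c) 1" by (auto simp: indicator_def split: if_splits)
  then obtain i :: 'n where "c \<le> s$i - t$i" "c \<le> t$i" by (auto simp: mem_box_cart)
  moreover have "s$i \<le> 1" using assms(1) by (auto simp: unit_cube_def mem_box_cart)
  ultimately show False using assms(2) by linarith
qed

lemma ind_refl_meas[measurable]:
  fixes s :: "'a::euclidean_space"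
  assumes "A \<in> sets borel"
  shows "(\<lambda>t. indicator A (s - t) :: real) \<in> borel_measurable lebesgue"
proof -
  have "(\<lambda>t. indicator A (s - t) :: real) \<in> borel_measurable lborel"
    using assms by measurable
  then show ?thesis by (rule measurable_completion)
qed

lemma B_meas:
  fixes xdag :: "real^'n \<Rightarrow> real"
  assumes "xdag \<in> borel_measurable lebesgue"
  shows "(\<lambda>t. indicator (cbox 0 s) t * (a * indicator (cbox (\<chi> i. c) 1) (s - t) * xdag t)) \<in> borel_measurable lebesgue"
proof -
  have [measurable]: "(\<lambda>t. indicator (cbox (\<chi> i. c) 1) (s - t) :: real) \<in> borel_measurable lebesgue"
    by (rule ind_refl_meas) simp
  show ?thesis using assms
    by (intro borel_measurable_times borel_measurable_const) (auto intro: borel_measurable_indicator)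
qed


lemma pointwise_bound:
  fixes xdag :: "real^'n \<Rightarrow> real" and s :: "real^'n"
  assumes meas: "xdag \<in> borel_measurable lebesgue"
    and intI: "integrable lebesgue (\<lambda>u. indicator (cbox 0 (\<chi> i. e)) u * \<bar>xdag u\<bar>)"
    and e: "0 < e" "e < 1/2" and a: "0 \<le> a"
    and C_def: "C = cbox (\<chi> i. 1 - e) (1::real^'n)"
  shows "\<bar>autoconv (\<lambda>t. xdag t + a * indicator C t) s - autoconv xdag s\<bar>
     \<le> 2 * a * (LINT u|lebesgue. indicator (cbox 0 (\<chi> i. e)) u * \<bar>xdag u\<bar>) * indicator C s"
proof -
  define I where "I = (LINT u|lebesgue. indicator (cbox 0 (\<chi> i. e)) u * \<bar>xdag u\<bar>)"
  have I0: "0 \<le> I" unfolding I_def by (rule integral_nonneg_AE) auto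
  have RHS0: "0 \<le> 2 * a * I * indicator C s" using I0 a by simp
  show ?thesis
  proof (cases "s \<in> unit_cube")
    case False
    then show ?thesis using RHS0 unfolding I_def by (simp add: autoconv_def)
  next
    case yes: True
    define S where "S = cbox 0 s"
    have Ssets: "S \<in> sets lebesgue" unfolding S_def by simp
    have ac: "\<And>x. autoconv x s = (LINT t|lebesgue. indicator S t * (x (s - t) * x t))"
      unfolding autoconv_def using yes Ssets by (simp add: integral_restrict_space S_def)
    define A where "A t = indicator S t * (xdag (s - t) * xdag t)" for t
    define B where "B t = indicator S t * (a * indicator C (s - t) * xdag t)" for t
    have Sref: "\<And>t. indicator S (s - t) = (indicator S t :: real)"
      by (auto simp: S_def indicator_def mem_box_cart)
    have eq: "indicator S t * ((xdag (s-t) + a * indicator C (s-t)) * (xdag t + a * indicator C t))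
        = A t + B t + B (s - t)" for t
    proof -
      have hz: "indicator C (s - t) * indicator C t = (0::real)"
        unfolding C_def by (rule hh_zero[OF yes]) (use e in simp)
      have "indicator S t * ((xdag (s-t) + a * indicator C (s-t)) * (xdag t + a * indicator C t))
         = indicator S t * (xdag (s-t) * xdag t) + indicator S t * (a * indicator C (s-t) * xdag t)
           + indicator S t * (a * indicator C t * xdag (s-t))
           + a * a * indicator S t * (indicator C (s - t) * indicator C t)"
        by (simp add: algebra_simps)
      also have "\<dots> = A t + B t + B (s - t)"
        unfolding A_def B_def using hz Sref[of t] by simp
      finally show ?thesis .
    qed
    have Bmeas: "B \<in> borel_measurable lebesgue"
      unfolding B_def C_def S_def using B_meas[OF meas] by simp
    have Bbound: "\<bar>B t\<bar> \<le> a * indicator C s * (indicator (cbox 0 (\<chi> i. e)) t * \<bar>xdag t\<bar>)" for t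
    proof (cases "B t = 0")
      case True then show ?thesis using a by simp
    next
      case False
      then have tS: "t \<in> S" and tC: "s - t \<in> C" by (auto simp: B_def indicator_def split: if_splits)
      have "t \<in> cbox 0 (\<chi> i. e) \<and> s \<in> C"
        using tS tC yes unfolding S_def C_def unit_cube_def mem_box_cart
        by (auto simp: algebra_simps) (smt (verit))+
      then show ?thesis using tS tC a by (simp add: B_def abs_mult)
    qed
    have Bint: "integrable lebesgue B"
      by (rule Bochner_Integration.integrable_bound[OF integrable_mult_left[OF intI, of "a * indicator C s"] Bmeas])
         (use Bbound a in \<open>auto intro!: AE_I2 simp: abs_mult mult.commute\<close>)
    have LB: "\<bar>integral\<^sup>L lebesgue B\<bar> \<le> a * I * indicator C s"
    proof -
      have "\<bar>integral\<^sup>L lebesgue B\<bar> \<le> (LINT t|lebesgue. \<bar>B t\<bar>)" by (rule integral_abs_bound)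
      also have "\<dots> \<le> (LINT t|lebesgue. a * indicator C s * (indicator (cbox 0 (\<chi> i. e)) t * \<bar>xdag t\<bar>))"
        by (rule integral_mono) (use Bint intI Bbound in auto)
      also have "\<dots> = a * I * indicator C s" unfolding I_def by simp
      finally show ?thesis .
    qed
    have Br: "integrable lebesgue (\<lambda>t. B (s - t))" "(LINT t|lebesgue. B (s - t)) = integral\<^sup>L lebesgue B"
      using integrable_reflect_leb[OF Bmeas, of s] Bint by auto
    have D: "autoconv (\<lambda>t. xdag t + a * indicator C t) s - autoconv xdag s
        = (LINT t|lebesgue. A t + B t + B (s - t)) - integral\<^sup>L lebesgue A"
      unfolding ac eq by (simp add: A_def[abs_def])
    show ?thesis
    proof (cases "integrable lebesgue A")
      case True
      then have "(LINT t|lebesgue. A t + B t + B (s - t)) = integral\<^sup>L lebesgue A + integral\<^sup>L lebesgue B + integral\<^sup>L lebesgue B"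
        using Bint Br by simp
      then show ?thesis unfolding D I_def[symmetric] using LB by simp
    next
      case False
      have "\<not> integrable lebesgue (\<lambda>t. A t + B t + B (s - t))"
      proof
        assume "integrable lebesgue (\<lambda>t. A t + B t + B (s - t))"
        then have "integrable lebesgue (\<lambda>t. (A t + B t + B (s - t)) - B t - B (s - t))"
          using Bint Br by (intro Bochner_Integration.integrable_diff) auto
        then show False using False by simp
      qed
      then show ?thesis unfolding D I_def[symmetric] using False RHS0 by (simp add: not_integrable_integral_eq)
    qed
  qed
qed

lemma e_lim: "(\<lambda>k. 1 / (real k + 3)) \<longlonglongrightarrow> 0"
proof -
  have "(\<lambda>k. 1 / (real (k + 3))) \<longlonglongrightarrow> 0"
    using LIMSEQ_ignore_initial_segment[OF lim_1_over_n, of 3] by simp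
  then show ?thesis by (simp add: add.commute)
qed
lemma measC: "measure lebesgue (cbox (\<chi> i. c) (1::real^'n)) = (1 - c) ^ CARD('n)" if "c \<le> 1"
proof -
  have "measure lebesgue (cbox (\<chi> i. c) (1::real^'n)) = measure lborel (cbox (\<chi> i. c) (1::real^'n))"
    by (simp add: measure_completion)
  also have "\<dots> = (1 - c) ^ CARD('n)"
    using that by (subst content_cbox_cart) (auto simp: interval_ne_empty_cart)
  finally show ?thesis .
qed
lemma AE_ne: "AE u in lebesgue. u \<noteq> (c::'a::euclidean_space)"
  by (rule AE_completion) (rule AE_lborel_singleton)

lemma ind_abs_meas:
  fixes f :: "'a::euclidean_space \<Rightarrow> real"
  assumes "A \<in> sets lebesgue" "f \<in> borel_measurable lebesgue"
  shows "(\<lambda>u. indicator A u * \<bar>f u\<bar>) \<in> borel_measurable lebesgue"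
proof -
  have "(\<lambda>u. \<bar>f u\<bar>) \<in> borel_measurable lebesgue" using assms(2) by measurable
  then show ?thesis using assms(1) by (intro borel_measurable_times borel_measurable_indicator) auto
qed

lemma ind_meas2:
  fixes f :: "'a::euclidean_space \<Rightarrow> real"
  assumes "A \<in> sets lebesgue" "f \<in> borel_measurable lebesgue"
  shows "(\<lambda>u. f u + c * indicator A u) \<in> borel_measurable lebesgue"
  using assms by (intro borel_measurable_add borel_measurable_times borel_measurable_indicator borel_measurable_const) auto

lemma cbox_sub: "e \<le> 1 \<Longrightarrow> cbox 0 (\<chi> i. e) \<subseteq> (unit_cube :: (real^'n) set)"
  unfolding unit_cube_def mem_box_cart subset_iff by (auto simp: mem_box_cart) (meson order_trans)

theorem theorem4p1:
  fixes xdag :: "real^'n \<Rightarrow> real" and r :: real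
  assumes "xdag \<in> Dplus" and "r > 0"
  shows "\<exists>xs :: nat \<Rightarrow> (real^'n \<Rightarrow> real).
           (\<forall>k. xs k \<in> Dplus) \<and>
           (\<forall>k. L2norm (\<lambda>t. xs k t - xdag t) \<le> r) \<and>
           (\<lambda>k. L2norm (\<lambda>s. autoconv (xs k) s - autoconv xdag s)) \<longlonglongrightarrow> 0 \<and>
           \<not> ((\<lambda>k. L2norm (\<lambda>t. xs k t - xdag t)) \<longlonglongrightarrow> 0)"
proof -
  have meas[measurable]: "xdag \<in> borel_measurable lebesgue"
    and sq: "integrable lebesgue (\<lambda>t. (xdag t)^2)"
    and out: "AE t in lebesgue. t \<notin> unit_cube \<longrightarrow> xdag t = 0"
    and pos: "AE t in lebesgue. t \<in> unit_cube \<longrightarrow> xdag t \<ge> 0"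
    using assms(1) by (auto simp: Dplus_def L2cube_def)
  have cube_sets: "unit_cube \<in> sets lebesgue" by (simp add: unit_cube_def)
  have cube_fin: "emeasure lebesgue (unit_cube :: (real^'n) set) < \<infinity>"
    unfolding unit_cube_def using lmeasurable_cbox fmeasurable_def by blast
  have F1: "integrable lebesgue (\<lambda>u. indicator unit_cube u * \<bar>xdag u\<bar>)"
  proof (rule Bochner_Integration.integrable_bound)
    show "integrable lebesgue (\<lambda>u. (xdag u)^2 + indicator unit_cube u)"
      using sq cube_sets cube_fin by (intro Bochner_Integration.integrable_add integrable_real_indicator) auto
    show "(\<lambda>u. indicator unit_cube u * \<bar>xdag u\<bar>) \<in> borel_measurable lebesgue"
      using cube_sets meas by (rule ind_abs_meas)
    show "AE u in lebesgue. norm (indicator unit_cube u * \<bar>xdag u\<bar>) \<le> norm ((xdag u)^2 + indicator unit_cube u)"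
    proof (rule AE_I2)
      fix u
      have "0 \<le> (\<bar>xdag u\<bar> - 1/2)^2" by simp
      then have "\<bar>xdag u\<bar> \<le> \<bar>xdag u\<bar>^2 + 1" by (simp add: power2_eq_square algebra_simps)
      then have "\<bar>xdag u\<bar> \<le> (xdag u)^2 + 1" by simp
      then show "norm (indicator unit_cube u * \<bar>xdag u\<bar>) \<le> norm ((xdag u)^2 + indicator unit_cube u)"
        by (auto simp: indicator_def)
    qed
  qed
  have F2: "integrable lebesgue (\<lambda>u. indicator (cbox 0 (\<chi> i. e)) u * \<bar>xdag u\<bar>)" if "e \<le> 1" for e
  proof (rule Bochner_Integration.integrable_bound[OF F1])
    show "(\<lambda>u. indicator (cbox 0 (\<chi> i. e)) u * \<bar>xdag u\<bar>) \<in> borel_measurable lebesgue"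
      using meas by (intro ind_abs_meas) auto
    have "cbox 0 (\<chi> i. e) \<subseteq> unit_cube" using that by (rule cbox_sub)
    then show "AE u in lebesgue. norm (indicator (cbox 0 (\<chi> i. e)) u * \<bar>xdag u\<bar>) \<le> norm (indicator unit_cube u * \<bar>xdag u\<bar>)"
      by (intro AE_I2) (auto simp: indicator_def)
  qed
  define N where "N = CARD('n)"
  define e where "e k = 1 / (real k + 3)" for k :: nat
  define C where "C k = cbox (\<chi> i. 1 - e k) (1::real^'n)" for k
  define a where "a k = r / sqrt (e k ^ N)" for k
  define I where "I k = (LINT u|lebesgue. indicator (cbox 0 (\<chi> i. e k)) u * \<bar>xdag u\<bar>)" for k
  define xs where "xs k = (\<lambda>t. xdag t + a k * indicator (C k) t)" for k
  have e_pos: "0 < e k" and e_half: "e k < 1/2" for k unfolding e_def by auto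
  have a_nn: "0 \<le> a k" for k unfolding a_def using assms(2) e_pos[of k] by simp
  have Csets: "C k \<in> sets lebesgue" for k unfolding C_def by simp
  have Cmeas: "measure lebesgue (C k) = e k ^ N" for k
    unfolding C_def N_def using measC[of "1 - e k"] e_pos[of k] by simp
  have Cfin: "emeasure lebesgue (C k) < \<infinity>" for k
    unfolding C_def using lmeasurable_cbox fmeasurable_def by blast
  have Ccube: "C k \<subseteq> unit_cube" for k
    unfolding C_def unit_cube_def subset_iff mem_box_cart
  proof (intro allI impI)
    fix x :: "real^'n" and i
    assume H: "\<forall>i. (\<chi> i. 1 - e k) $ i \<le> x $ i \<and> x $ i \<le> (1::real^'n) $ i"
    have "1 - e k \<le> x $ i" "x $ i \<le> 1" using H[rule_format, of i] by auto
    then show "(0::real^'n) $ i \<le> x $ i \<and> x $ i \<le> (1::real^'n) $ i" using e_half[of k] by simp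
  qed
  have a2: "(a k)^2 * e k ^ N = r^2" for k
    unfolding a_def using e_pos[of k] by (simp add: power_divide)
  have hsq: "(LINT t|lebesgue. (c * indicator (C k) t)^2) = c^2 * e k ^ N" for c k
  proof -
    have "(\<lambda>t. (c * indicator (C k) t)^2) = (\<lambda>t. c^2 * indicator (C k) t :: real)"
      by (auto simp: indicator_def power_mult_distrib)
    then show ?thesis using Csets Cfin Cmeas by simp
  qed
  have hint: "integrable lebesgue (\<lambda>t. (c * indicator (C k) t :: real)^2)" for c k
  proof -
    have "(\<lambda>t. (c * indicator (C k) t)^2) = (\<lambda>t. c^2 * indicator (C k) t :: real)"
      by (auto simp: indicator_def power_mult_distrib)
    then show ?thesis using Csets Cfin by simp
  qed
  have norm_eq: "L2norm (\<lambda>t. xs k t - xdag t) = r" for k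
    unfolding L2norm_def xs_def using hsq[of "a k" k] a2[of k] assms(2) by simp
  have inD: "xs k \<in> Dplus" for k
  proof -
    have m: "xs k \<in> borel_measurable lebesgue" unfolding xs_def using Csets[of k] meas by (rule ind_meas2)
    have i: "integrable lebesgue (\<lambda>t. (xs k t)^2)"
    proof (rule Bochner_Integration.integrable_bound)
      show "integrable lebesgue (\<lambda>t. 2 * (xdag t)^2 + 2 * (a k * indicator (C k) t)^2)"
        using sq hint[of "a k" k] by auto
      show "(\<lambda>t. (xs k t)^2) \<in> borel_measurable lebesgue" using m by measurable
      show "AE t in lebesgue. norm ((xs k t)^2) \<le> norm (2 * (xdag t)^2 + 2 * (a k * indicator (C k) t)^2)"
      proof (rule AE_I2)
        fix t
        have "(xdag t + a k * indicator (C k) t)^2 \<le> 2 * (xdag t)^2 + 2 * (a k * indicator (C k) t)^2"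
          using zero_le_power2[of "xdag t - a k * indicator (C k) t"] by (simp add: power2_eq_square algebra_simps)
        then show "norm ((xs k t)^2) \<le> norm (2 * (xdag t)^2 + 2 * (a k * indicator (C k) t)^2)"
          by (simp add: xs_def)
      qed
    qed
    have o: "AE t in lebesgue. t \<notin> unit_cube \<longrightarrow> xs k t = 0"
      using out by eventually_elim (use Ccube[of k] in \<open>auto simp: xs_def indicator_def\<close>)
    have p: "AE t in lebesgue. t \<in> unit_cube \<longrightarrow> xs k t \<ge> 0"
      using pos by eventually_elim (use a_nn[of k] in \<open>auto simp: xs_def indicator_def\<close>)
    show ?thesis using m i o p by (simp add: Dplus_def L2cube_def)
  qed
  have bound: "L2norm (\<lambda>s. autoconv (xs k) s - autoconv xdag s) \<le> 2 * r * I k" for k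
  proof -
    define D where "D s = autoconv (xs k) s - autoconv xdag s" for s
    have I0: "0 \<le> I k" unfolding I_def by (rule integral_nonneg_AE) auto
    have pb: "\<bar>D s\<bar> \<le> 2 * a k * I k * indicator (C k) s" for s
      unfolding D_def xs_def I_def
      by (rule pointwise_bound[OF meas F2 e_pos e_half a_nn]) (use e_half[of k] in \<open>simp_all add: C_def\<close>)
    have sqb: "(D s)^2 \<le> (2 * a k * I k * indicator (C k) s)^2" for s
      using power_mono[OF pb[of s] abs_ge_zero, of 2] by (simp only: power2_abs)
    have "(LINT s|lebesgue. (D s)^2) \<le> (2 * a k * I k)^2 * e k ^ N"
    proof (cases "integrable lebesgue (\<lambda>s. (D s)^2)")
      case True
      have "(LINT s|lebesgue. (D s)^2) \<le> (LINT s|lebesgue. (2 * a k * I k * indicator (C k) s)^2)"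
        by (rule integral_mono) (use True hint[of "2 * a k * I k" k] sqb in auto)
      also have "\<dots> = (2 * a k * I k)^2 * e k ^ N" using hsq by simp
      finally show ?thesis .
    next
      case False
      then show ?thesis using e_pos[of k] by (simp add: not_integrable_integral_eq)
    qed
    also have "\<dots> = (2 * r * I k)^2"
      using a2[of k] by (simp add: power_mult_distrib)
    finally have "sqrt (LINT s|lebesgue. (D s)^2) \<le> sqrt ((2 * r * I k)^2)" by (rule real_sqrt_le_mono)
    then show ?thesis using I0 assms(2) unfolding L2norm_def D_def by simp
  qed
  have Ilim: "I \<longlonglongrightarrow> 0"
  proof -
    have "(\<lambda>k. LINT u|lebesgue. indicator (cbox 0 (\<chi> i. e k)) u * \<bar>xdag u\<bar>) \<longlonglongrightarrow> integral\<^sup>L lebesgue (\<lambda>u::real^'n. 0::real)"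
    proof (rule integral_dominated_convergence[where w = "\<lambda>u. indicator unit_cube u * \<bar>xdag u\<bar>" and f = "\<lambda>u. 0" and s = "\<lambda>k u. indicator (cbox 0 (\<chi> i. e k)) u * \<bar>xdag u\<bar>"])
      show "(\<lambda>u. 0::real) \<in> borel_measurable lebesgue" by simp
      show "(\<lambda>u. indicator (cbox 0 (\<chi> i. e k)) u * \<bar>xdag u\<bar>) \<in> borel_measurable lebesgue" for k
        using meas by (intro ind_abs_meas) auto
      show "integrable lebesgue (\<lambda>u. indicator unit_cube u * \<bar>xdag u\<bar>)" by (rule F1)
      show "AE u in lebesgue. norm (indicator (cbox 0 (\<chi> i. e k)) u * \<bar>xdag u\<bar>) \<le> indicator unit_cube u * \<bar>xdag u\<bar>" for k
      proof -
        have "cbox 0 (\<chi> i. e k) \<subseteq> unit_cube" using e_half[of k] by (intro cbox_sub) simp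
        then show ?thesis by (intro AE_I2) (auto simp: indicator_def)
      qed
      show "AE u in lebesgue. (\<lambda>k. indicator (cbox 0 (\<chi> i. e k)) u * \<bar>xdag u\<bar>) \<longlonglongrightarrow> 0"
        using AE_ne[of 0]
      proof eventually_elim
        case (elim u)
        then obtain j where j: "u $ j \<noteq> 0" by (metis vec_eq_iff zero_index)
        have ev: "\<forall>\<^sub>F k in sequentially. u \<notin> cbox 0 (\<chi> i. e k)"
        proof (cases "u $ j < 0")
          case True then show ?thesis by (auto simp: mem_box_cart intro!: always_eventually exI[of _ j])
        next
          case False
          then have "u $ j > 0" using j by simp
          then have "\<forall>\<^sub>F k in sequentially. e k < u $ j"
            using order_tendstoD(2)[OF e_lim] unfolding e_def by blast
          then show ?thesis by eventually_elim (auto simp: mem_box_cart not_le intro!: exI[of _ j])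
        qed
        show ?case by (rule tendsto_eventually) (use ev in \<open>eventually_elim, simp\<close>)
      qed
    qed
    then show ?thesis unfolding I_def by simp
  qed
  have "(\<lambda>k. L2norm (\<lambda>s. autoconv (xs k) s - autoconv xdag s)) \<longlonglongrightarrow> 0"
  proof (rule tendsto_sandwich[where f = "\<lambda>_. 0" and h = "\<lambda>k. 2 * r * I k"])
    show "\<forall>\<^sub>F k in sequentially. 0 \<le> L2norm (\<lambda>s. autoconv (xs k) s - autoconv xdag s)"
      by (simp add: L2norm_def)
    show "\<forall>\<^sub>F k in sequentially. L2norm (\<lambda>s. autoconv (xs k) s - autoconv xdag s) \<le> 2 * r * I k"
      using bound by simp
    show "(\<lambda>_. 0::real) \<longlonglongrightarrow> 0" by simp
    show "(\<lambda>k. 2 * r * I k) \<longlonglongrightarrow> 0" using tendsto_mult_right_zero[OF Ilim, of "2 * r"] by simp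
  qed
  moreover have "\<not> ((\<lambda>k. L2norm (\<lambda>t. xs k t - xdag t)) \<longlonglongrightarrow> 0)"
    using norm_eq assms(2) LIMSEQ_const_iff[of r 0] by simp
  ultimately show ?thesis using inD norm_eq by (intro exI[of _ xs]) auto
qed

end
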